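(* For every $x'\in\mathbb R^d$, $$\hat w^\top x'-\gamma(x')\;\le\; w^{*\top}_{\tilde C}x'\;\le\;\hat w^\top x'+\delta(x').$$
   Context: Let $\{(x_i,y_i)\}_{i=1}^n\subset\mathbb R^d\times\{-1,1\}$ be a training set. Let $\ell:\{-1,1\}\times\mathbb R\to\mathbb R$ be convex in its second argument, and set $\ell_i(w):=\ell(y_i,w^\top x_i)$ for $w\in\mathbb R^d$. For $C>0$ let $w^*_C$ be the (unique) minimizer over $w\in\mathbb R^d$ of $P_C(w)=\frac12\|w\|^2+C\sum_{i=1}^n\ell_i(w)$, where $\|\cdot\|$ is the Euclidean norm. Fix $\tilde C>0$ and an arbitrary vector $\hat w\in\mathbb R^d$; for each $i$ let $\xi_i\in\partial\ell_i(\hat w)$ be any subgradient of $\ell_i$ at $\hat w$, and set $g:=\hat w+\tilde C\sum_{i=1}^n\xi_i$. For $x\in\mathbb R^d$ define $\gamma(x):=\frac12(\|g\|\|x\|+g^\top x)$ and $\delta(x):=\frac12(\|g\|\|x\|-g^\top x)$. *)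

theory Defs
  imports "HOL-Analysis.Analysis"
begin

definition subgradient :: "('a::real_inner \<Rightarrow> real) \<Rightarrow> 'a \<Rightarrow> 'a set" where
  "subgradient f w = {xi. \<forall>v. f v \<ge> f w + inner xi (v - w)}"

end

theory Submission
  imports Defs
begin

theorem corollary1:
  fixes n :: nat
    and x :: "nat \<Rightarrow> real ^ 'd"
    and y :: "nat \<Rightarrow> real"
    and loss :: "real \<Rightarrow> real \<Rightarrow> real"
    and Ct :: real
    and what wstar :: "real ^ 'd"
    and xi :: "nat \<Rightarrow> real ^ 'd"
    and x' :: "real ^ 'd"
  assumes y_pm: "\<And>i. i \<in> {1..n} \<Longrightarrow> y i \<in> {-1, 1}"
    and loss_convex: "\<And>t. t \<in> {-1, 1} \<Longrightarrow> convex_on UNIV (loss t)"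
    and Ct_pos: "Ct > 0"
    and wstar_min: "\<And>w. (1/2) * norm wstar ^ 2 + Ct * (\<Sum>i=1..n. loss (y i) (inner wstar (x i)))
                        \<le> (1/2) * norm w ^ 2 + Ct * (\<Sum>i=1..n. loss (y i) (inner w (x i)))"
    and xi_sub: "\<And>i. i \<in> {1..n} \<Longrightarrow> xi i \<in> subgradient (\<lambda>w. loss (y i) (inner w (x i))) what"
  shows "let g = what + Ct *\<^sub>R (\<Sum>i=1..n. xi i);
             \<gamma> = (norm g * norm x' + inner g x') / 2;
             \<delta> = (norm g * norm x' - inner g x') / 2
         in inner what x' - \<gamma> \<le> inner wstar x' \<and> inner wstar x' \<le> inner what x' + \<delta>"
proof -
  define g where "g = what + Ct *\<^sub>R (\<Sum>i=1..n. xi i)"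
  define d where "d = wstar - what"
  define Lw where "Lw = (\<Sum>i=1..n. loss (y i) (inner wstar (x i)))"
  define Lh where "Lh = (\<Sum>i=1..n. loss (y i) (inner what (x i)))"
  have sub: "Lw \<ge> Lh + inner (\<Sum>i=1..n. xi i) d"
  proof -
    have "\<And>i. i \<in> {1..n} \<Longrightarrow> loss (y i) (inner wstar (x i)) \<ge> loss (y i) (inner what (x i)) + inner (xi i) d"
      using xi_sub unfolding subgradient_def d_def by blast
    hence "(\<Sum>i=1..n. loss (y i) (inner what (x i)) + inner (xi i) d) \<le> Lw"
      unfolding Lw_def by (intro sum_mono) auto
    thus ?thesis unfolding Lh_def by (simp add: sum.distrib inner_sum_left)
  qed
  have mn: "(1/2) * norm wstar ^ 2 + Ct * Lw \<le> (1/2) * norm what ^ 2 + Ct * Lh"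
    using wstar_min[of what] unfolding Lw_def Lh_def .
  have nw: "norm wstar ^ 2 = norm what ^ 2 + 2 * inner what d + norm d ^ 2"
    unfolding d_def by (simp add: power2_norm_eq_inner algebra_simps inner_commute)
  define e where "e = what - wstar"
  define A where "A = inner wstar e + Ct * (Lh - Lw)"
  have At: "A \<ge> - (t/2) * norm e ^ 2" if t0: "0 < t" and t1: "t \<le> 1" for t
  proof -
    define wt where "wt = wstar + t *\<^sub>R e"
    have wt': "wt = (1 - t) *\<^sub>R wstar + t *\<^sub>R what"
      unfolding wt_def e_def by (simp add: algebra_simps)
    have "(\<Sum>i=1..n. loss (y i) (inner wt (x i))) \<le> (\<Sum>i=1..n. (1 - t) * loss (y i) (inner wstar (x i)) + t * loss (y i) (inner what (x i)))"
    proof (rule sum_mono)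
      fix i assume i: "i \<in> {1..n}"
      have "inner wt (x i) = (1 - t) *\<^sub>R inner wstar (x i) + t *\<^sub>R inner what (x i)"
        unfolding wt' by (simp add: inner_add_left)
      thus "loss (y i) (inner wt (x i)) \<le> (1 - t) * loss (y i) (inner wstar (x i)) + t * loss (y i) (inner what (x i))"
        using convex_onD[OF loss_convex[OF y_pm[OF i]], of t] t0 t1 by simp
    qed
    hence Lt: "(\<Sum>i=1..n. loss (y i) (inner wt (x i))) \<le> (1 - t) * Lw + t * Lh"
      unfolding Lw_def Lh_def by (simp add: sum.distrib sum_distrib_left)
    have nwt: "norm wt ^ 2 = norm wstar ^ 2 + 2 * t * inner wstar e + t^2 * norm e ^ 2"
      unfolding wt_def power2_norm_eq_inner
      by (simp add: inner_add_left inner_add_right inner_commute algebra_simps power2_eq_square)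
    have "(1/2) * norm wstar ^ 2 + Ct * Lw \<le> (1/2) * norm wt ^ 2 + Ct * (\<Sum>i=1..n. loss (y i) (inner wt (x i)))"
      using wstar_min[of wt] unfolding Lw_def .
    also have "\<dots> \<le> (1/2) * norm wt ^ 2 + Ct * ((1 - t) * Lw + t * Lh)"
      using mult_left_mono[OF Lt, of Ct] Ct_pos by simp
    finally have "0 \<le> t * (A + (t/2) * norm e ^ 2)"
      unfolding nwt A_def by (simp add: algebra_simps power2_eq_square)
    hence "0 \<le> A + (t/2) * norm e ^ 2" using t0 by (simp add: zero_le_mult_iff)
    thus ?thesis by simp
  qed
  have A0: "A \<ge> 0"
  proof (rule ccontr)
    assume "\<not> A \<ge> 0"
    hence an: "A < 0" by simp
    define N where "N = norm e ^ 2"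
    have N0: "N \<ge> 0" unfolding N_def by simp
    define t where "t = min 1 (- A / (N + 1))"
    have t0: "0 < t" unfolding t_def using an N0 by (simp add: divide_neg_pos)
    have t1: "t \<le> 1" unfolding t_def by simp
    have "t * N \<le> (- A / (N + 1)) * N" unfolding t_def using N0 by (intro mult_right_mono) auto
    also have "\<dots> = (- A) * (N / (N + 1))" by simp
    also have "\<dots> < (- A) * 1"
      using an N0 by (intro mult_strict_left_mono) auto
    also have "\<dots> = - A" by simp
    finally have "t * N < - A" .
    moreover have "A \<ge> - (t/2) * N" using At[OF t0 t1] unfolding N_def .
    moreover have "- (t/2) * N = - (t * N) / 2" by simp
    ultimately show False using an by linarith
  qed
  have key: "inner g d + norm d ^ 2 \<le> 0"
  proof -
    have "Ct * Lw \<ge> Ct * Lh + Ct * inner (\<Sum>i=1..n. xi i) d"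
      using mult_left_mono[OF sub, of Ct] Ct_pos by (simp add: algebra_simps)
    moreover have "inner g d = inner what d + Ct * inner (\<Sum>i=1..n. xi i) d"
      unfolding g_def by (simp add: inner_add_left)
    moreover have "e = - d" unfolding e_def d_def by simp
    moreover have "inner wstar d = inner what d + norm d ^ 2"
      unfolding d_def by (simp add: power2_norm_eq_inner algebra_simps inner_commute)
    moreover have "Ct * (Lh - Lw) = Ct * Lh - Ct * Lw" by (simp add: right_diff_distrib)
    ultimately show ?thesis using A0 unfolding A_def by simp
  qed
  define c where "c = d + (1/2) *\<^sub>R g"
  have "norm c ^ 2 = norm d ^ 2 + inner g d + (1/4) * norm g ^ 2"
    unfolding c_def by (simp add: power2_norm_eq_inner algebra_simps inner_commute)
  moreover have "((1/2) * norm g) ^ 2 = (1/4) * norm g ^ 2" by (simp add: power2_eq_square)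
  ultimately have "norm c ^ 2 \<le> ((1/2) * norm g) ^ 2" using key by linarith
  hence nc: "norm c \<le> (1/2) * norm g"
    by (rule power2_le_imp_le) simp
  have "\<bar>inner c x'\<bar> \<le> norm c * norm x'" by (rule Cauchy_Schwarz_ineq2)
  also have "\<dots> \<le> (1/2) * norm g * norm x'" by (rule mult_right_mono[OF nc]) simp
  finally have ab: "\<bar>inner c x'\<bar> \<le> (1/2) * norm g * norm x'" .
  have "inner c x' = inner wstar x' - inner what x' + (1/2) * inner g x'"
    unfolding c_def d_def by (simp add: inner_add_left inner_diff_left)
  have "inner what x' - (norm g * norm x' + inner g x') / 2 \<le> inner wstar x'
     \<and> inner wstar x' \<le> inner what x' + (norm g * norm x' - inner g x') / 2"
  proof -
    have h: "1/2 * norm g * norm x' = (norm g * norm x') / 2" by simp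
    show ?thesis using ab \<open>inner c x' = _\<close> unfolding abs_le_iff h by (simp add: field_simps)
  qed
  thus ?thesis unfolding g_def Let_def .
qed

end
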